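(* For any graph $G$ and any two independent sets $I_s,I_t$ of $G$, a shortest reconfiguration sequence from $I_s$ to $I_t$ has length at most $\mathrm{cc}(I_s\triangle I_t)$.
   Context: All graphs are finite, simple and undirected. For $V'\subseteq V(G)$, $\mathrm{cc}(V')$ denotes the number of connected components of the induced subgraph $G[V']$. A reconfiguration sequence from $I_s$ to $I_t$ of length $\ell$ is a sequence $\langle I_s=I_0,\dots,I_\ell=I_t\rangle$ of independent sets of $G$ such that $G[I_{i-1}\triangle I_i]$ is connected for every $i\in\{1,\dots,\ell\}$. *)

theory Defs
  imports Main
begin

definition simple_graph :: "'a set \<Rightarrow> ('a \<Rightarrow> 'a \<Rightarrow> bool) \<Rightarrow> bool" where
  "simple_graph V E \<longleftrightarrow> finite V \<and> (\<forall>u v. E u v \<longrightarrow> u \<in> V \<and> v \<in> V)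
     \<and> (\<forall>u v. E u v \<longrightarrow> E v u) \<and> (\<forall>v. \<not> E v v)"

definition independent_set :: "'a set \<Rightarrow> ('a \<Rightarrow> 'a \<Rightarrow> bool) \<Rightarrow> 'a set \<Rightarrow> bool" where
  "independent_set V E I \<longleftrightarrow> I \<subseteq> V \<and> (\<forall>u\<in>I. \<forall>v\<in>I. \<not> E u v)"

definition reach_in :: "('a \<Rightarrow> 'a \<Rightarrow> bool) \<Rightarrow> 'a set \<Rightarrow> 'a \<Rightarrow> 'a \<Rightarrow> bool" where
  "reach_in E S u v \<longleftrightarrow> (\<lambda>x y. x \<in> S \<and> y \<in> S \<and> E x y)\<^sup>*\<^sup>* u v \<and> u \<in> S \<and> v \<in> S"

definition components :: "('a \<Rightarrow> 'a \<Rightarrow> bool) \<Rightarrow> 'a set \<Rightarrow> 'a set set" where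
  "components E S = (\<lambda>v. {u. reach_in E S v u}) ` S"

definition cc :: "('a \<Rightarrow> 'a \<Rightarrow> bool) \<Rightarrow> 'a set \<Rightarrow> nat" where
  "cc E S = card (components E S)"

definition induced_connected :: "('a \<Rightarrow> 'a \<Rightarrow> bool) \<Rightarrow> 'a set \<Rightarrow> bool" where
  "induced_connected E S \<longleftrightarrow> S \<noteq> {} \<and> (\<forall>u\<in>S. \<forall>v\<in>S. reach_in E S u v)"

definition sym_diff :: "'a set \<Rightarrow> 'a set \<Rightarrow> 'a set" where
  "sym_diff A B = (A - B) \<union> (B - A)"

definition reconf_seq :: "'a set \<Rightarrow> ('a \<Rightarrow> 'a \<Rightarrow> bool) \<Rightarrow> 'a set \<Rightarrow> 'a set \<Rightarrow> 'a set list \<Rightarrow> bool" where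
  "reconf_seq V E Is It seq \<longleftrightarrow> seq \<noteq> [] \<and> hd seq = Is \<and> last seq = It
     \<and> (\<forall>I\<in>set seq. independent_set V E I)
     \<and> (\<forall>i. 0 < i \<and> i < length seq \<longrightarrow> induced_connected E (sym_diff (seq ! (i - 1)) (seq ! i)))"

definition seq_length :: "'a set list \<Rightarrow> nat" where
  "seq_length seq = length seq - 1"

end

theory Submission
  imports Defs
begin

lemma reach_sym:
  assumes "\<forall>u v. E u v \<longrightarrow> E v u" "reach_in E D u v"
  shows "reach_in E D v u"
proof -
  let ?R = "\<lambda>x y. x \<in> D \<and> y \<in> D \<and> E x y"
  have "?R\<^sup>*\<^sup>* u v" using assms(2) by (simp add: reach_in_def)
  then have "?R\<^sup>*\<^sup>* v u"
  proof (induction rule: rtranclp_induct)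
    case base then show ?case by simp
  next
    case (step y z)
    then have "?R z y" using assms(1) by blast
    then show ?case by (rule converse_rtranclp_into_rtranclp[of ?R, OF _ step(3)])
  qed
  then show ?thesis using assms(2) by (simp add: reach_in_def)
qed

lemma reach_trans:
  assumes "reach_in E D u v" "reach_in E D v w"
  shows "reach_in E D u w"
  using assms unfolding reach_in_def by (meson rtranclp_trans)

lemma reach_refl: "v \<in> D \<Longrightarrow> reach_in E D v v"
  by (simp add: reach_in_def)

lemma comp_eq:
  assumes "\<forall>u v. E u v \<longrightarrow> E v u" "reach_in E D v u"
  shows "{x. reach_in E D u x} = {x. reach_in E D v x}"
proof -
  have vu: "reach_in E D u v" using reach_sym[OF assms(1,2)] .
  show ?thesis
  proof (intro set_eqI iffI; simp)
    fix x assume "reach_in E D u x" then show "reach_in E D v x" using reach_trans[OF assms(2)] by simp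
  next
    fix x assume "reach_in E D v x" then show "reach_in E D u x" using reach_trans[OF vu] by simp
  qed
qed

lemma comps_disj:
  assumes "\<forall>u v. E u v \<longrightarrow> E v u" "c1 \<in> components E D" "c2 \<in> components E D" "c1 \<noteq> c2"
  shows "c1 \<inter> c2 = {}"
proof (rule ccontr)
  assume "c1 \<inter> c2 \<noteq> {}"
  then obtain w where w: "w \<in> c1" "w \<in> c2" by blast
  obtain v1 where v1: "c1 = {u. reach_in E D v1 u}" using assms(2) by (auto simp: components_def)
  obtain v2 where v2: "c2 = {u. reach_in E D v2 u}" using assms(3) by (auto simp: components_def)
  have "c1 = {x. reach_in E D w x}" using comp_eq[OF assms(1), of D v1 w] w v1 by simp
  moreover have "c2 = {x. reach_in E D w x}" using comp_eq[OF assms(1), of D v2 w] w v2 by simp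
  ultimately show False using assms(4) by simp
qed

lemma reach_within_comp:
  assumes "reach_in E D v u"
  shows "reach_in E {x. reach_in E D v x} v u"
proof -
  let ?R = "\<lambda>x y. x \<in> D \<and> y \<in> D \<and> E x y"
  let ?C = "{x. reach_in E D v x}"
  let ?RC = "\<lambda>x y. x \<in> ?C \<and> y \<in> ?C \<and> E x y"
  have vD: "v \<in> D" using assms by (simp add: reach_in_def)
  have "?R\<^sup>*\<^sup>* v u" using assms by (simp add: reach_in_def)
  then have "?RC\<^sup>*\<^sup>* v u"
  proof (induction rule: rtranclp_induct)
    case base then show ?case by simp
  next
    case (step y z)
    have "reach_in E D v y" using step(1,2) vD by (simp add: reach_in_def)
    moreover have "?R\<^sup>*\<^sup>* v z" using step(1,2) by (rule rtranclp.rtrancl_into_rtrancl[of ?R])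
    then have "reach_in E D v z" using step(2) vD by (simp add: reach_in_def)
    ultimately have "?RC y z" using step(2) by simp
    then show ?case by (rule rtranclp.rtrancl_into_rtrancl[of ?RC, OF step(3)])
  qed
  moreover have "v \<in> ?C" "u \<in> ?C" using vD assms by (auto simp: reach_in_def)
  ultimately show ?thesis by (simp add: reach_in_def)
qed

lemma comp_connected:
  assumes "\<forall>u v. E u v \<longrightarrow> E v u" "c \<in> components E D"
  shows "induced_connected E c"
proof -
  obtain v where v: "v \<in> D" "c = {u. reach_in E D v u}" using assms(2) by (auto simp: components_def)
  have "v \<in> c" using v(1) reach_refl[of v D E] v(2) by simp
  moreover have "reach_in E c u w" if "u \<in> c" "w \<in> c" for u w
  proof -
    have "reach_in E D v u" using that(1) v(2) by simp
    then have "reach_in E c v u" using reach_within_comp[of E D v u] v(2) by simp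
    then have 1: "reach_in E c u v" using reach_sym[OF assms(1)] by metis
    have "reach_in E D v w" using that(2) v(2) by simp
    then have 2: "reach_in E c v w" using reach_within_comp[of E D v w] v(2) by simp
    show ?thesis using reach_trans[OF 1 2] .
  qed
  ultimately show ?thesis unfolding induced_connected_def by blast
qed

lemma comp_closed:
  assumes "c \<in> components E D" "x \<in> c" "y \<in> D" "E x y"
  shows "y \<in> c"
proof -
  obtain v where v: "v \<in> D" "c = {u. reach_in E D v u}" using assms(1) by (auto simp: components_def)
  have xD: "x \<in> D" using assms(2) v by (simp add: reach_in_def)
  have "(\<lambda>x y. x \<in> D \<and> y \<in> D \<and> E x y)\<^sup>*\<^sup>* x y"
    by (rule r_into_rtranclp) (simp add: xD assms(3,4))
  then have "reach_in E D x y" using xD assms(3) by (simp add: reach_in_def)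
  moreover have "reach_in E D v x" using assms(2) v by simp
  ultimately have "reach_in E D v y" using reach_trans by metis
  then show ?thesis using v by simp
qed

lemma union_comps: "\<Union>(components E D) = D"
  unfolding components_def using reach_refl by (auto simp: reach_in_def)

lemma indep_union:
  assumes "simple_graph V E" "independent_set V E Is" "independent_set V E It"
    "S \<subseteq> components E (sym_diff Is It)"
  shows "independent_set V E (sym_diff Is (\<Union>S))"
proof -
  let ?D = "sym_diff Is It"
  have "\<Union>S \<subseteq> \<Union>(components E ?D)" using assms(4) by blast
  then have UD: "\<Union>S \<subseteq> ?D" by (simp only: union_comps)
  have sy: "\<forall>u v. E u v \<longrightarrow> E v u" using assms(1) by (simp add: simple_graph_def)
  have key: "\<not> E u v" if hu: "u \<in> Is - \<Union>S" and hv: "v \<in> \<Union>S \<inter> It" for u v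
  proof
    assume e: "E u v"
    show False
    proof (cases "u \<in> It")
      case True then show False using e hu hv assms(3) by (auto simp: independent_set_def)
    next
      case False
      then have uD: "u \<in> ?D" using hu by (auto simp: sym_diff_def)
      obtain c where c: "c \<in> S" "v \<in> c" using hv by blast
      have "E v u" using e sy by blast
      moreover have "c \<in> components E ?D" using c(1) assms(4) by blast
      ultimately have "u \<in> c" using comp_closed[of c E ?D v u] c(2) uD by simp
      then show False using hu c(1) by blast
    qed
  qed
  have eq: "sym_diff Is (\<Union>S) = (Is - \<Union>S) \<union> (\<Union>S \<inter> It)"
    using UD by (auto simp: sym_diff_def)
  show ?thesis unfolding eq independent_set_def
  proof (intro conjI ballI)
    show "Is - \<Union> S \<union> \<Union> S \<inter> It \<subseteq> V" using assms(2,3) by (auto simp: independent_set_def)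
  next
    fix u v assume "u \<in> Is - \<Union> S \<union> \<Union> S \<inter> It" "v \<in> Is - \<Union> S \<union> \<Union> S \<inter> It"
    then consider "u \<in> Is" "v \<in> Is" | "u \<in> It" "v \<in> It" | "u \<in> Is - \<Union> S" "v \<in> \<Union> S \<inter> It"
      | "v \<in> Is - \<Union> S" "u \<in> \<Union> S \<inter> It" by blast
    then show "\<not> E u v"
    proof cases
      case 1 then show ?thesis using assms(2) unfolding independent_set_def by blast
    next
      case 2 then show ?thesis using assms(3) unfolding independent_set_def by blast
    next
      case 3 then show ?thesis using key by blast
    next
      case 4 then have "\<not> E v u" using key by blast
      then show ?thesis using sy by blast
    qed
  qed
qed

lemma reconf_cons:
  assumes "reconf_seq V E Y It s" "independent_set V E X" "induced_connected E (sym_diff X Y)"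
  shows "reconf_seq V E X It (X # s)"
proof -
  have s: "s \<noteq> []" "hd s = Y" "last s = It" "\<forall>I\<in>set s. independent_set V E I"
    "\<forall>i. 0 < i \<and> i < length s \<longrightarrow> induced_connected E (sym_diff (s ! (i - 1)) (s ! i))"
    using assms(1) unfolding reconf_seq_def by blast+
  have c: "\<forall>i. 0 < i \<and> i < length (X#s) \<longrightarrow> induced_connected E (sym_diff ((X#s) ! (i - 1)) ((X#s) ! i))"
  proof (intro allI impI)
    fix i assume that: "0 < i \<and> i < length (X#s)"
    then obtain j where j: "i = Suc j" by (cases i) auto
    show "induced_connected E (sym_diff ((X#s) ! (i - 1)) ((X#s) ! i))"
    proof (cases j)
      case 0 
      have "s ! 0 = Y" using s(1,2) by (simp add: hd_conv_nth)
      then show ?thesis using j 0 assms(3) by simp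
    next
      case (Suc k)
      have "induced_connected E (sym_diff (s ! (j - 1)) (s ! j))" using s(5)[rule_format, of j] that j Suc by simp
      then show ?thesis using j Suc by simp
    qed
  qed
  have "hd (X#s) = X" "X#s \<noteq> []" "last (X#s) = It" using s(1,3) by simp_all
  moreover have "\<forall>I\<in>set (X#s). independent_set V E I" using s(4) assms(2) by simp
  ultimately show ?thesis using c unfolding reconf_seq_def by blast
qed

lemma build:
  assumes "simple_graph V E" "independent_set V E Is" "independent_set V E It"
  shows "set cs \<inter> S = {} \<Longrightarrow> set cs \<union> S = components E (sym_diff Is It) \<Longrightarrow> distinct cs \<Longrightarrow>
    \<exists>s. reconf_seq V E (sym_diff Is (\<Union>S)) It s \<and> length s = length cs + 1"
proof (induction cs arbitrary: S)
  case Nil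
  then have "\<Union>S = sym_diff Is It" using union_comps by simp
  then have "sym_diff Is (\<Union>S) = It" by (auto simp: sym_diff_def)
  then have "reconf_seq V E (sym_diff Is (\<Union>S)) It [It]" using assms(3) by (simp add: reconf_seq_def)
  then show ?case by auto
next
  case (Cons c cs)
  let ?D = "sym_diff Is It"
  have sy: "\<forall>u v. E u v \<longrightarrow> E v u" using assms(1) by (simp add: simple_graph_def)
  from Cons.prems have "set cs \<inter> insert c S = {}" "set cs \<union> insert c S = components E ?D" "distinct cs"
    by auto
  from Cons.IH[OF this] obtain s where s: "reconf_seq V E (sym_diff Is (\<Union>(insert c S))) It s"
    "length s = length cs + 1" by blast
  have cC: "c \<in> components E ?D" using Cons.prems by auto
  have cS: "c \<notin> S" using Cons.prems(1) by auto
  have "c \<inter> c' = {}" if "c' \<in> S" for c'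
  proof -
    have "c' \<in> components E ?D" using Cons.prems(2) that by auto
    moreover have "c \<noteq> c'" using cS that by auto
    ultimately show ?thesis using comps_disj[OF sy cC] by blast
  qed
  then have disj: "c \<inter> \<Union>S = {}" by blast
  have "\<Union>(insert c S) = c \<union> \<Union>S" by simp
  then have "sym_diff (sym_diff Is (\<Union>S)) (sym_diff Is (\<Union>(insert c S))) = c"
    using disj unfolding sym_diff_def by blast
  then have conn: "induced_connected E (sym_diff (sym_diff Is (\<Union>S)) (sym_diff Is (\<Union>(insert c S))))"
    using comp_connected[OF sy cC] by simp
  have "S \<subseteq> components E ?D" using Cons.prems(2) by blast
  then have ind: "independent_set V E (sym_diff Is (\<Union>S))"
    using indep_union[OF assms] by blast
  have r: "reconf_seq V E (sym_diff Is (\<Union>S)) It (sym_diff Is (\<Union>S) # s)"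
    using reconf_cons[OF s(1) ind conn] .
  have "length (sym_diff Is (\<Union>S) # s) = length (c # cs) + 1" using s(2) by simp
  then show ?case using r by blast
qed

theorem mainTheorem19:
  assumes "simple_graph V E"
    and "independent_set V E Is" and "independent_set V E It"
  shows "\<exists>seq. reconf_seq V E Is It seq
           \<and> (\<forall>seq'. reconf_seq V E Is It seq' \<longrightarrow> seq_length seq \<le> seq_length seq')
           \<and> seq_length seq \<le> cc E (sym_diff Is It)"
proof -
  let ?D = "sym_diff Is It"
  have "finite ?D" using assms unfolding simple_graph_def independent_set_def sym_diff_def
    by (meson finite_Diff finite_UnI rev_finite_subset)
  then have "finite (components E ?D)" by (simp add: components_def)
  then obtain cs where cs: "set cs = components E ?D" "distinct cs" using finite_distinct_list by blast
  have "sym_diff Is (\<Union>{}) = Is" by (simp add: sym_diff_def)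
  then obtain s0 where s0: "reconf_seq V E Is It s0" "length s0 = length cs + 1"
    using build[OF assms, of cs "{}"] cs by auto
  have l0: "seq_length s0 \<le> cc E ?D"
    using s0(2) cs distinct_card by (fastforce simp: seq_length_def cc_def)
  obtain seq where seq: "reconf_seq V E Is It seq"
    "\<forall>y. reconf_seq V E Is It y \<longrightarrow> seq_length seq \<le> seq_length y"
    using ex_has_least_nat[of "reconf_seq V E Is It" s0 seq_length] s0(1) by blast
  then show ?thesis using s0(1) l0 by (meson le_trans)
qed

end
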